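(* Let $\mathcal{G}^{\mathrm{aff}}$ be the family of all routing problems with affine latency functions, with homogeneous users. For a bound $\beta\ge0$, an optimal $\beta$-bounded tolling mechanism is $$T^{\mathrm{opt}+}(af+b;\beta)=\begin{cases}\beta a f & \beta\in[0,1),\\ a f & \beta\ge1,\end{cases}$$ with $$\mathrm{PoA}\big(\mathcal{G}^{\mathrm{aff}},T^{\mathrm{opt}+}(\beta)\big)=\begin{cases}\dfrac{4}{3+2\beta-\beta^2} & \beta\in[0,1),\\ 1 & \beta\ge1.\end{cases}$$ An optimal $\beta$-bounded subsidy mechanism is $$T^{\mathrm{opt}-}(af+b;\beta)=\begin{cases}-\beta b & \beta\in[0,1/2),\\ -b/2 & \beta\ge1/2,\end{cases}$$ with $$\mathrm{PoA}\big(\mathcal{G}^{\mathrm{aff}},T^{\mathrm{opt}-}(\beta)\big)=\begin{cases}\dfrac{4}{3+2\hat\beta-\hat\beta^2} & \beta\in[0,1/2),\\ 1 & \beta\ge1/2,\end{cases}\qquad \hat\beta=\frac{1}{1-\beta}-1.$$ Consequently, for every $\beta\in(0,1)$, $\mathrm{PoA}(\mathcal{G}^{\mathrm{aff}},T^{\mathrm{opt}+}(\beta))>\mathrm{PoA}(\mathcal{G}^{\mathrm{aff}},T^{\mathrm{opt}-}(\beta))$.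
   Context: A routing problem $G$ consists of a directed graph $(V,E)$, origin–destination pairs $(o_i,d_i)$ with traffic masses $r_i>0$, $\sum_ir_i=1$, and for each edge $e$ a latency function $\ell_e$; in $\mathcal{G}^{\mathrm{aff}}$ every latency has the form $\ell(f)=af+b$ with $a,b\ge0$, and $L(\mathcal{G}^{\mathrm{aff}})$ is the set of all such functions. Let $\mathcal{P}_i$ be the set of simple $o_i$–$d_i$ paths. A flow assigns mass $f_P\ge0$ to each path, is feasible if $\sum_{P\in\mathcal{P}_i}f_P=r_i$, and has edge flows $f_e=\sum_{P\ni e}f_P$; its total latency is $\mathcal{L}(f)=\sum_ef_e\ell_e(f_e)$ and $\mathcal{L}^{\mathrm{opt}}(G)$ is the minimum over feasible flows. Users form a continuum $N=\bigcup_iN_i$ of disjoint intervals of Lebesgue measure $r_i$, choosing paths in $\mathcal{P}_i$; users are homogeneous (sensitivity $1$). An incentive mechanism $T$ assigns to each latency $\ell$ a function $T(\ell):[0,1]\to\mathbb{R}$, and edge $e$ receives $\tau_e=T(\ell_e)$. A user on path $P$ under flow $f$ has cost $\sum_{e\in P}(\ell_e(f_e)+\tau_e(f_e))$; a Nash flow is a feasible flow in which every user uses a cost-minimizing path. $\mathcal{L}^{\mathrm{Nash}}(G,T)$ is the highest total latency of a Nash flow and $\mathrm{PoA}(\mathcal{G},T)=\sup_{G\in\mathcal{G}}\mathcal{L}^{\mathrm{Nash}}(G,T)/\mathcal{L}^{\mathrm{opt}}(G)$. A $\beta$-bounded tolling mechanism satisfies $T(\ell)[f]\in[0,\beta\ell(f)]$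 for all $f\in[0,1]$; a $\beta$-bounded subsidy mechanism satisfies $T(\ell)[f]\in[-\beta\ell(f),0]$. An optimal $\beta$-bounded tolling (subsidy) mechanism is one minimizing $\mathrm{PoA}(\mathcal{G}^{\mathrm{aff}},\cdot)$ over all $\beta$-bounded tolling (subsidy) mechanisms. *)

theory Defs
  imports Complex_Main "HOL-Library.Extended_Real"
begin

text \<open>Vertices and edges are labelled by natural numbers
(this covers every finite directed multigraph up to isomorphism). Commodities are indexed by i < ncom.\<close>

record routing_problem =
  edges :: "nat set"
  src   :: "nat \<Rightarrow> nat"
  dst   :: "nat \<Rightarrow> nat"
  ncom  :: nat
  orig  :: "nat \<Rightarrow> nat"
  dest  :: "nat \<Rightarrow> nat"
  rate  :: "nat \<Rightarrow> real"
  lat   :: "nat \<Rightarrow> real \<Rightarrow> real"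

definition simple_path :: "routing_problem \<Rightarrow> nat \<Rightarrow> nat \<Rightarrow> nat list \<Rightarrow> bool" where
  "simple_path G o' d P \<longleftrightarrow>
     set P \<subseteq> edges G \<and> distinct (o' # map (dst G) P) \<and>
     (P = [] \<longrightarrow> o' = d) \<and>
     (P \<noteq> [] \<longrightarrow> src G (hd P) = o' \<and> dst G (last P) = d) \<and>
     (\<forall>j. Suc j < length P \<longrightarrow> dst G (P ! j) = src G (P ! Suc j))"

definition paths :: "routing_problem \<Rightarrow> nat \<Rightarrow> nat list set" where
  "paths G i = {P. simple_path G (orig G i) (dest G i) P}"

definition wf_rp :: "routing_problem \<Rightarrow> bool" where
  "wf_rp G \<longleftrightarrow> finite (edges G) \<and>
     (\<forall>i<ncom G. rate G i > 0) \<and> (\<Sum>i<ncom G. rate G i) = 1 \<and>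
     (\<forall>i<ncom G. paths G i \<noteq> {})"

definition affine_lats :: "(real \<Rightarrow> real) set" where
  "affine_lats = {l. \<exists>a b. a \<ge> 0 \<and> b \<ge> 0 \<and> l = (\<lambda>x. a * x + b)}"

definition affine_rp :: "routing_problem \<Rightarrow> bool" where
  "affine_rp G \<longleftrightarrow> (\<forall>e\<in>edges G. lat G e \<in> affine_lats)"

definition G_aff :: "routing_problem set" where
  "G_aff = {G. wf_rp G \<and> affine_rp G}"

text \<open>Flows: f i P is the mass of commodity i on path P.\<close>
type_synonym flow = "nat \<Rightarrow> nat list \<Rightarrow> real"

definition feasible :: "routing_problem \<Rightarrow> flow \<Rightarrow> bool" where
  "feasible G f \<longleftrightarrow> (\<forall>i<ncom G. (\<forall>P. f i P \<ge> 0) \<and> (\<forall>P. P \<notin> paths G i \<longrightarrow> f i P = 0)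
      \<and> (\<Sum>P\<in>paths G i. f i P) = rate G i)"

definition edge_flow :: "routing_problem \<Rightarrow> flow \<Rightarrow> nat \<Rightarrow> real" where
  "edge_flow G f e = (\<Sum>i<ncom G. \<Sum>P\<in>{P\<in>paths G i. e \<in> set P}. f i P)"

definition total_latency :: "routing_problem \<Rightarrow> flow \<Rightarrow> real" where
  "total_latency G f = (\<Sum>e\<in>edges G. edge_flow G f e * lat G e (edge_flow G f e))"

definition L_opt :: "routing_problem \<Rightarrow> real" where
  "L_opt G = Inf (total_latency G ` {f. feasible G f})"

text \<open>Incentive mechanism: maps a latency function to a toll/subsidy function.\<close>
type_synonym mechanism = "(real \<Rightarrow> real) \<Rightarrow> (real \<Rightarrow> real)"

definition path_cost :: "routing_problem \<Rightarrow> mechanism \<Rightarrow> flow \<Rightarrow> nat list \<Rightarrow> real" where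
  "path_cost G T f P =
     sum_list (map (\<lambda>e. lat G e (edge_flow G f e) + T (lat G e) (edge_flow G f e)) P)"

definition nash :: "routing_problem \<Rightarrow> mechanism \<Rightarrow> flow \<Rightarrow> bool" where
  "nash G T f \<longleftrightarrow> feasible G f \<and>
     (\<forall>i<ncom G. \<forall>P\<in>paths G i. f i P > 0 \<longrightarrow>
        (\<forall>Q\<in>paths G i. path_cost G T f P \<le> path_cost G T f Q))"

text \<open>Highest total latency of a Nash flow (convention: \<infinity> if no Nash flow exists).\<close>
definition L_nash :: "routing_problem \<Rightarrow> mechanism \<Rightarrow> ereal" where
  "L_nash G T = (if {f. nash G T f} = {} then \<infinity>
                 else (SUP f\<in>{f. nash G T f}. ereal (total_latency G f)))"

text \<open>Ratio with conventions 0/0 = 1 and x/0 = \<infinity> for x > 0.\<close>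
definition ratio :: "ereal \<Rightarrow> real \<Rightarrow> ereal" where
  "ratio x y = (if y = 0 then (if x = 0 then 1 else \<infinity>) else x / ereal y)"

definition PoA :: "routing_problem set \<Rightarrow> mechanism \<Rightarrow> ereal" where
  "PoA \<G> T = (SUP G\<in>\<G>. ratio (L_nash G T) (L_opt G))"

definition tolling_bounded :: "real \<Rightarrow> mechanism \<Rightarrow> bool" where
  "tolling_bounded \<beta> T \<longleftrightarrow>
     (\<forall>l\<in>affine_lats. \<forall>x\<in>{0..1}. 0 \<le> T l x \<and> T l x \<le> \<beta> * l x)"

definition subsidy_bounded :: "real \<Rightarrow> mechanism \<Rightarrow> bool" where
  "subsidy_bounded \<beta> T \<longleftrightarrow>
     (\<forall>l\<in>affine_lats. \<forall>x\<in>{0..1}. - \<beta> * l x \<le> T l x \<and> T l x \<le> 0)"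

definition optimal_tolling :: "real \<Rightarrow> mechanism \<Rightarrow> bool" where
  "optimal_tolling \<beta> T \<longleftrightarrow> tolling_bounded \<beta> T \<and>
     (\<forall>T'. tolling_bounded \<beta> T' \<longrightarrow> PoA G_aff T \<le> PoA G_aff T')"

definition optimal_subsidy :: "real \<Rightarrow> mechanism \<Rightarrow> bool" where
  "optimal_subsidy \<beta> T \<longleftrightarrow> subsidy_bounded \<beta> T \<and>
     (\<forall>T'. subsidy_bounded \<beta> T' \<longrightarrow> PoA G_aff T \<le> PoA G_aff T')"

text \<open>For an affine latency l(f) = a f + b we have a = l 1 - l 0 and b = l 0.\<close>
definition T_opt_plus :: "real \<Rightarrow> mechanism" where
  "T_opt_plus \<beta> l = (\<lambda>x. (if \<beta> < 1 then \<beta> * (l 1 - l 0) * x else (l 1 - l 0) * x))"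

definition T_opt_minus :: "real \<Rightarrow> mechanism" where
  "T_opt_minus \<beta> l = (\<lambda>x. (if \<beta> < 1/2 then - \<beta> * l 0 else - l 0 / 2))"

end

theory Submission
  imports Defs "HOL-Analysis.Analysis"
begin


lemma path_props:
  assumes "P \<in> paths G i"
  shows "set P \<subseteq> edges G" "distinct P"
  using assms by (auto simp: paths_def Defs.simple_path_def dest: distinct_map[THEN iffD1])

lemma finite_paths:
  assumes "finite (edges G)" shows "finite (paths G i)"
proof -
  have "paths G i \<subseteq> {xs. set xs \<subseteq> edges G \<and> length xs \<le> card (edges G)}"
  proof
    fix P assume P: "P \<in> paths G i"
    then have s: "set P \<subseteq> edges G" and d: "distinct P" using path_props by auto
    then have "length P = card (set P)" by (simp add: distinct_card)
    also have "\<dots> \<le> card (edges G)" using s assms card_mono by blast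
    finally show "P \<in> {xs. set xs \<subseteq> edges G \<and> length xs \<le> card (edges G)}" using s by auto
  qed
  moreover have "finite {xs. set xs \<subseteq> edges G \<and> length xs \<le> card (edges G)}"
    using finite_lists_length_le[OF assms] by simp
  ultimately show ?thesis by (rule finite_subset)
qed

lemma path_cost_sum:
  assumes "P \<in> paths G i"
  shows "path_cost G T f P = (\<Sum>e\<in>set P. lat G e (edge_flow G f e) + T (lat G e) (edge_flow G f e))"
  using path_props[OF assms] by (simp add: path_cost_def sum_list_distinct_conv_sum_set)

lemma edge_flow_lin:
  "edge_flow G (\<lambda>i P. f i P + c * g i P) e = edge_flow G f e + c * edge_flow G g e"
  by (simp add: edge_flow_def sum.distrib sum_distrib_left)

lemma edge_flow_diff:
  "edge_flow G (\<lambda>i P. f i P - g i P) e = edge_flow G f e - edge_flow G g e"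
  by (simp add: edge_flow_def sum_subtractf)

definition delta :: "nat \<Rightarrow> nat list \<Rightarrow> flow" where
  "delta i Q = (\<lambda>i' P'. if i' = i \<and> P' = Q then 1 else 0)"

lemma edge_flow_delta:
  assumes "finite (edges G)" "i < ncom G" "Q \<in> paths G i"
  shows "edge_flow G (delta i Q) e = (if e \<in> set Q then 1 else 0)"
proof -
  have "edge_flow G (delta i Q) e = (\<Sum>i'<ncom G. if i' = i then (if e \<in> set Q then 1 else 0) else 0)"
    unfolding edge_flow_def
  proof (rule sum.cong)
    fix i' assume "i' \<in> {..<ncom G}"
    show "(\<Sum>P\<in>{P \<in> paths G i'. e \<in> set P}. delta i Q i' P) = (if i' = i then (if e \<in> set Q then 1 else 0) else 0)"
      using assms finite_paths[OF assms(1), of i'] by (auto simp: delta_def)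
  qed simp
  also have "\<dots> = (if e \<in> set Q then 1 else 0)" using assms(2) by simp
  finally show ?thesis .
qed

lemma sum_delta_paths:
  assumes "finite (edges G)" "Q \<in> paths G i"
  shows "(\<Sum>P\<in>paths G i'. delta i Q i' P) = (if i' = i then 1 else 0)"
  using assms finite_paths[OF assms(1), of i'] by (auto simp: delta_def)

lemma exchange:
  assumes fin: "finite (edges G)"
  shows "(\<Sum>i<ncom G. \<Sum>P\<in>paths G i. h i P * (\<Sum>e\<in>set P. w e)) = (\<Sum>e\<in>edges G. w e * edge_flow G h e)"
proof -
  have "(\<Sum>i<ncom G. \<Sum>P\<in>paths G i. h i P * (\<Sum>e\<in>set P. w e))
      = (\<Sum>i<ncom G. \<Sum>P\<in>paths G i. \<Sum>e\<in>edges G. w e * (if e \<in> set P then h i P else 0))"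
  proof (intro sum.cong refl)
    fix i P assume "P \<in> paths G i"
    then have s: "set P \<subseteq> edges G" using path_props by auto
    have "(\<Sum>e\<in>set P. w e) = (\<Sum>e\<in>{e \<in> edges G. e \<in> set P}. w e)"
      using s by (intro sum.cong) auto
    also have "\<dots> = (\<Sum>e\<in>edges G. if e \<in> set P then w e else 0)"
      using fin by (simp add: sum.inter_filter)
    finally show "h i P * (\<Sum>e\<in>set P. w e) = (\<Sum>e\<in>edges G. w e * (if e \<in> set P then h i P else 0))"
      by (simp add: sum_distrib_left if_distrib mult.commute cong: if_cong)
  qed
  also have "\<dots> = (\<Sum>e\<in>edges G. \<Sum>i<ncom G. \<Sum>P\<in>paths G i. w e * (if e \<in> set P then h i P else 0))"
    by (simp add: sum.swap[of _ "edges G"])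
  also have "\<dots> = (\<Sum>e\<in>edges G. w e * edge_flow G h e)"
  proof (intro sum.cong refl)
    fix e
    have "edge_flow G h e = (\<Sum>i<ncom G. \<Sum>P\<in>paths G i. (if e \<in> set P then h i P else 0))"
      unfolding edge_flow_def using finite_paths[OF fin] by (simp add: sum.inter_filter)
    then show "(\<Sum>i<ncom G. \<Sum>P\<in>paths G i. w e * (if e \<in> set P then h i P else 0)) = w e * edge_flow G h e"
      by (simp add: sum_distrib_left)
  qed
  finally show ?thesis .
qed

lemma feasible_exists:
  assumes "wf_rp G" shows "\<exists>f. feasible G f \<and> (\<forall>i P. ncom G \<le> i \<longrightarrow> f i P = 0)"
proof -
  define f where "f = (\<lambda>i P. if i < ncom G \<and> P = (SOME P. P \<in> paths G i) then rate G i else 0)"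
  have fin: "finite (edges G)" using assms by (simp add: wf_rp_def)
  have "feasible G f"
    unfolding feasible_def
  proof (intro allI impI conjI)
    fix i P assume i: "i < ncom G"
    have ne: "paths G i \<noteq> {}" and r: "rate G i > 0" using assms i by (auto simp: wf_rp_def)
    then have sp: "(SOME P. P \<in> paths G i) \<in> paths G i" by (simp add: some_in_eq)
    show "0 \<le> f i P" using r by (simp add: f_def)
    show "P \<notin> paths G i \<Longrightarrow> f i P = 0" using sp by (auto simp: f_def)
    have "(\<Sum>P\<in>paths G i. f i P) = (\<Sum>P\<in>paths G i. if P = (SOME P. P \<in> paths G i) then rate G i else 0)"
      using i by (simp add: f_def)
    also have "\<dots> = rate G i" using sp finite_paths[OF fin, of i] by (simp add: sum.delta')
    finally show "(\<Sum>P\<in>paths G i. f i P) = rate G i" .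
  qed
  then show ?thesis by (auto simp: f_def)
qed



lemma cont_coord [continuous_intros]: "continuous_on S (\<lambda>f::flow. f i P)"
proof -
  have c1: "continuous_on UNIV (\<lambda>f::flow. f i)" by simp
  have c2: "continuous_on UNIV (\<lambda>g::nat list \<Rightarrow> real. g P)" by simp
  have "continuous_on UNIV ((\<lambda>g::nat list \<Rightarrow> real. g P) \<circ> (\<lambda>f::flow. f i))"
    by (rule continuous_on_compose[OF c1 continuous_on_subset[OF c2]]) simp
  then show ?thesis unfolding o_def by (rule continuous_on_subset) auto
qed

lemma cont_edge_flow [continuous_intros]: "continuous_on S (\<lambda>f. edge_flow G f e)"
  unfolding edge_flow_def by (intro continuous_intros)

lemma compact_box: "compact {f::flow. \<forall>i P. f i P \<in> {0..1}}"
proof -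
  have inner: "compact (PiE UNIV (\<lambda>P::nat list. {0..1::real}))"
    using compactin_PiE[of "\<lambda>_. euclidean" UNIV "\<lambda>P::nat list. {0..1::real}"]
    by (simp add: euclidean_product_topology compactin_euclidean_iff)
  have "compact (PiE UNIV (\<lambda>i::nat. PiE UNIV (\<lambda>P::nat list. {0..1::real})))"
    using compactin_PiE[of "\<lambda>_. euclidean" UNIV "\<lambda>i::nat. PiE UNIV (\<lambda>P::nat list. {0..1::real})"] inner
    by (simp add: euclidean_product_topology compactin_euclidean_iff)
  moreover have "PiE UNIV (\<lambda>i::nat. PiE UNIV (\<lambda>P::nat list. {0..1::real})) = {f::flow. \<forall>i P. f i P \<in> {0..1}}"
    by (auto simp: PiE_def Pi_def extensional_def)
  ultimately show ?thesis by simp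
qed

lemma closed_coord_le: "closed {f::flow. c \<le> f i P}"
  by (intro closed_Collect_le continuous_intros)

lemma closed_coord_eq: "closed {f::flow. f i P = c}"
  by (intro closed_Collect_eq continuous_intros)

lemma closed_sum_eq: "closed {f::flow. (\<Sum>P\<in>A. f i P) = c}"
  by (intro closed_Collect_eq continuous_intros)

definition Kset :: "routing_problem \<Rightarrow> flow set" where
  "Kset G = {f. feasible G f \<and> (\<forall>i P. ncom G \<le> i \<longrightarrow> f i P = 0)}"

lemma closed_Kset: "closed (Kset G)"
proof -
  have a: "Kset G = {f. (\<forall>i P. 0 \<le> f i P) \<and> (\<forall>i P. (P \<notin> paths G i \<or> ncom G \<le> i) \<longrightarrow> f i P = 0)
     \<and> (\<forall>i<ncom G. (\<Sum>P\<in>paths G i. f i P) = rate G i)}"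
  proof (intro set_eqI iffI)
    fix f assume "f \<in> Kset G"
    then show "f \<in> {f. (\<forall>i P. 0 \<le> f i P) \<and> (\<forall>i P. (P \<notin> paths G i \<or> ncom G \<le> i) \<longrightarrow> f i P = 0)
     \<and> (\<forall>i<ncom G. (\<Sum>P\<in>paths G i. f i P) = rate G i)}"
    proof -
      assume f: "f \<in> Kset G"
      have h1: "\<forall>i P. 0 \<le> f i P"
      proof (intro allI)
        fix i P show "0 \<le> f i P"
          using f by (cases "i < ncom G") (auto simp: Kset_def feasible_def)
      qed
      have h2: "\<forall>i P. (P \<notin> paths G i \<or> ncom G \<le> i) \<longrightarrow> f i P = 0"
      proof (intro allI)
        fix i P show "(P \<notin> paths G i \<or> ncom G \<le> i) \<longrightarrow> f i P = 0"
          using f by (cases "i < ncom G") (auto simp: Kset_def feasible_def)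
      qed
      have h3: "\<forall>i<ncom G. (\<Sum>P\<in>paths G i. f i P) = rate G i"
        using f by (auto simp: Kset_def feasible_def)
      show ?thesis using h1 h2 h3 by simp
    qed
  qed (auto simp: Kset_def feasible_def)
  have "Kset G = (\<Inter>i. \<Inter>P. {f. 0 \<le> f i P}) \<inter>
     (\<Inter>i. \<Inter>P\<in>{P. P \<notin> paths G i \<or> ncom G \<le> i}. {f. f i P = 0}) \<inter>
     (\<Inter>i\<in>{..<ncom G}. {f. (\<Sum>P\<in>paths G i. f i P) = rate G i})"
    unfolding a by blast
  moreover have "closed \<dots>"
    by (intro closed_Int closed_INT ballI closed_coord_le closed_sum_eq closed_coord_eq)
  ultimately show ?thesis by simp
qed

lemma feasible_le1:
  assumes wf: "wf_rp G" and f: "feasible G f" and i: "i < ncom G"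
  shows "f i P \<le> 1"
proof (cases "P \<in> paths G i")
  case True
  have fin: "finite (paths G i)" using wf finite_paths by (auto simp: wf_rp_def)
  have "f i P \<le> (\<Sum>P\<in>paths G i. f i P)"
    using f i True fin by (intro member_le_sum) (auto simp: feasible_def)
  also have "\<dots> = rate G i" using f i by (simp add: feasible_def)
  also have "\<dots> \<le> (\<Sum>i<ncom G. rate G i)"
    using wf i by (intro member_le_sum) (auto simp: wf_rp_def less_imp_le)
  also have "\<dots> = 1" using wf by (simp add: wf_rp_def)
  finally show ?thesis .
next
  case False then show ?thesis using f i by (simp add: feasible_def)
qed

lemma compact_Kset: assumes "wf_rp G" shows "compact (Kset G)"
proof -
  have "Kset G \<subseteq> {f::flow. \<forall>i P. f i P \<in> {0..1}}"
  proof
    fix f assume f: "f \<in> Kset G"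
    show "f \<in> {f::flow. \<forall>i P. f i P \<in> {0..1}}"
    proof (clarsimp)
      fix i P
      show "0 \<le> f i P \<and> f i P \<le> 1"
      proof (cases "i < ncom G")
        case True then show ?thesis using f feasible_le1[OF assms, of f i P] by (auto simp: Kset_def feasible_def)
      next
        case False then show ?thesis using f by (auto simp: Kset_def)
      qed
    qed
  qed
  then have "Kset G = {f::flow. \<forall>i P. f i P \<in> {0..1}} \<inter> Kset G" by blast
  also have "compact \<dots>" by (rule compact_Int_closed[OF compact_box closed_Kset])
  finally show ?thesis .
qed



lemma sum_indicator_sub:
  assumes "finite E" "S \<subseteq> E"
  shows "(\<Sum>e\<in>E. (if e \<in> S then 1 else 0) * c e) = sum (c::nat \<Rightarrow> real) S"
proof -
  have "(\<Sum>e\<in>E. (if e \<in> S then 1 else 0) * c e) = (\<Sum>e\<in>E. if e \<in> S then c e else 0)"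
    by (intro sum.cong) auto
  also have "\<dots> = sum c (E \<inter> S)" using assms by (simp add: sum.inter_restrict)
  also have "E \<inter> S = S" using assms by blast
  finally show ?thesis .
qed

lemma nash_exists:
  assumes wf: "wf_rp G"
  and lin: "\<forall>e\<in>edges G. \<exists>\<alpha> \<beta>. \<alpha> \<ge> 0 \<and> (\<forall>x. lat G e x + T (lat G e) x = \<alpha> * x + \<beta>)"
  shows "\<exists>f. nash G T f"
proof -
  have fin: "finite (edges G)" using wf by (simp add: wf_rp_def)
  obtain \<alpha> \<beta> where ab: "\<forall>e\<in>edges G. \<alpha> e \<ge> 0 \<and> (\<forall>x. lat G e x + T (lat G e) x = \<alpha> e * x + \<beta> e)"
    using lin by metis
  define \<Phi> where "\<Phi> f = (\<Sum>e\<in>edges G. \<alpha> e / 2 * (edge_flow G f e)^2 + \<beta> e * edge_flow G f e)" for f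
  have cont: "continuous_on (Kset G) \<Phi>" unfolding \<Phi>_def by (intro continuous_intros)
  have ne: "Kset G \<noteq> {}" using feasible_exists[OF wf] by (auto simp: Kset_def)
  obtain f0 where f0: "f0 \<in> Kset G" and min: "\<forall>g\<in>Kset G. \<Phi> f0 \<le> \<Phi> g"
    using continuous_attains_inf[OF compact_Kset[OF wf] ne cont] by blast
  have f0feas: "feasible G f0" using f0 by (simp add: Kset_def)
  have "nash G T f0"
    unfolding nash_def
  proof (intro conjI allI impI ballI f0feas)
    fix i P Q assume i: "i < ncom G" and P: "P \<in> paths G i" and pos: "0 < f0 i P" and Q: "Q \<in> paths G i"
    show "path_cost G T f0 P \<le> path_cost G T f0 Q"
    proof (rule ccontr)
      assume nle: "\<not> path_cost G T f0 P \<le> path_cost G T f0 Q"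
      define D where "D = path_cost G T f0 Q - path_cost G T f0 P"
      have D: "D < 0" using nle by (simp add: D_def)
      have PQ: "P \<noteq> Q" using D by (auto simp: D_def)
      define F where "F e = edge_flow G f0 e" for e
      define d where "d e = (if e \<in> set Q then 1 else 0) - (if e \<in> set P then 1 else 0::real)" for e
      define M where "M = (\<Sum>e\<in>edges G. \<alpha> e / 2 * (d e)^2)"
      have M: "M \<ge> 0" unfolding M_def using ab by (auto intro!: sum_nonneg)
      define \<epsilon> where "\<epsilon> = min (f0 i P) (- D / (M + 1))"
      have "- D / (M + 1) > 0" using D M by (intro divide_pos_pos) auto
      then have eps: "\<epsilon> > 0" using pos by (simp add: \<epsilon>_def)
      have epsle: "\<epsilon> \<le> f0 i P" by (simp add: \<epsilon>_def)
      have "\<epsilon> * M \<le> (- D / (M + 1)) * M" using M by (intro mult_right_mono) (auto simp: \<epsilon>_def)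
      also have "\<dots> < - D" using M D by (simp add: field_simps)
      finally have epsM: "\<epsilon> * M < - D" .
      define g where "g = (\<lambda>i' P'. f0 i' P' + \<epsilon> * (delta i Q i' P' - delta i P i' P'))"
      have ef: "edge_flow G g e = F e + \<epsilon> * d e" for e
        using edge_flow_lin[of G f0 \<epsilon> "\<lambda>i' P'. delta i Q i' P' - delta i P i' P'" e]
          edge_flow_diff[of G "delta i Q" "delta i P" e]
          edge_flow_delta[OF fin i Q, of e] edge_flow_delta[OF fin i P, of e]
        by (simp add: g_def F_def d_def)
      have ce: "lat G e (F e) + T (lat G e) (F e) = \<alpha> e * F e + \<beta> e" if "e \<in> edges G" for e
        using ab that by auto
      have sQ: "set Q \<subseteq> edges G" and sP: "set P \<subseteq> edges G" using path_props P Q by auto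
      have D_eq: "D = (\<Sum>e\<in>edges G. d e * (\<alpha> e * F e + \<beta> e))"
      proof -
        have "path_cost G T f0 Q = (\<Sum>e\<in>set Q. \<alpha> e * F e + \<beta> e)"
          unfolding path_cost_sum[OF Q] F_def[symmetric] using sQ ce by (intro sum.cong) auto
        also have "\<dots> = (\<Sum>e\<in>edges G. (if e \<in> set Q then 1 else 0) * (\<alpha> e * F e + \<beta> e))"
          using sum_indicator_sub[OF fin sQ] by simp
        finally have a: "path_cost G T f0 Q = \<dots>" .
        have "path_cost G T f0 P = (\<Sum>e\<in>set P. \<alpha> e * F e + \<beta> e)"
          unfolding path_cost_sum[OF P] F_def[symmetric] using sP ce by (intro sum.cong) auto
        also have "\<dots> = (\<Sum>e\<in>edges G. (if e \<in> set P then 1 else 0) * (\<alpha> e * F e + \<beta> e))"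
          using sum_indicator_sub[OF fin sP] by simp
        finally have b: "path_cost G T f0 P = \<dots>" .
        show ?thesis unfolding D_def a b d_def by (simp add: sum_subtractf[symmetric] left_diff_distrib)
      qed
      have "\<Phi> g = (\<Sum>e\<in>edges G. (\<alpha> e/2*F e^2 + \<beta> e*F e) + \<epsilon> * (d e * (\<alpha> e * F e + \<beta> e)) + \<epsilon>^2 * (\<alpha> e/2 * d e^2))"
        unfolding \<Phi>_def ef by (intro sum.cong) (auto simp: algebra_simps power2_eq_square)
      also have "\<dots> = \<Phi> f0 + \<epsilon> * D + \<epsilon>^2 * M"
        unfolding sum.distrib \<Phi>_def M_def D_eq sum_distrib_left[symmetric] F_def ..
      finally have "\<Phi> g = \<Phi> f0 + \<epsilon> * (D + \<epsilon> * M)" by (simp add: algebra_simps power2_eq_square)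
      moreover have "\<epsilon> * (D + \<epsilon> * M) < 0" using eps epsM by (simp add: mult_pos_neg)
      ultimately have lt: "\<Phi> g < \<Phi> f0" by simp
      have f0K: "\<forall>i' P'. 0 \<le> f0 i' P'"
      proof (intro allI)
        fix i' P' show "0 \<le> f0 i' P'" using f0 by (cases "i' < ncom G") (auto simp: Kset_def feasible_def)
      qed
      have gK: "g \<in> Kset G"
        unfolding Kset_def feasible_def mem_Collect_eq
      proof (intro conjI allI impI)
        fix i' P' assume "i' < ncom G"
        show "0 \<le> g i' P'"
          using f0K[rule_format, of i' P'] eps epsle PQ by (auto simp: g_def delta_def)
      next
        fix i' P' assume i': "i' < ncom G" "P' \<notin> paths G i'"
        then show "g i' P' = 0" using f0 P Q by (auto simp: g_def delta_def Kset_def feasible_def)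
      next
        fix i' assume i': "i' < ncom G"
        have "(\<Sum>P'\<in>paths G i'. g i' P') = (\<Sum>P'\<in>paths G i'. f0 i' P') + \<epsilon> * ((\<Sum>P'\<in>paths G i'. delta i Q i' P') - (\<Sum>P'\<in>paths G i'. delta i P i' P'))"
          by (simp add: g_def sum.distrib sum_distrib_left[symmetric] sum_subtractf)
        also have "\<dots> = rate G i'" using f0feas i' sum_delta_paths[OF fin Q, of i'] sum_delta_paths[OF fin P, of i']
          by (simp add: feasible_def)
        finally show "(\<Sum>P'\<in>paths G i'. g i' P') = rate G i'" .
      next
        fix i' P' assume "ncom G \<le> i'"
        then show "g i' P' = 0" using f0 i by (auto simp: g_def delta_def Kset_def)
      qed
      show False using min gK lt by force
    qed
  qed
  then show ?thesis by blast
qed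



definition rho :: "real \<Rightarrow> real" where "rho \<gamma> = 4 / ((1+\<gamma>)*(3-\<gamma>))"

lemma rho_ge1: assumes "0 \<le> \<gamma>" "\<gamma> \<le> 1" shows "rho \<gamma> \<ge> 1"
proof -
  have p: "(1+\<gamma>)*(3-\<gamma>) > 0" using assms by (intro mult_pos_pos) auto
  have "(1+\<gamma>)*(3-\<gamma>) \<le> 4" proof -
    have "4 - (1+\<gamma>)*(3-\<gamma>) = (1-\<gamma>)^2" by (simp add: algebra_simps power2_eq_square)
    then show ?thesis by (metis diff_ge_0_iff_ge zero_le_power2)
  qed
  then show ?thesis using p by (simp add: rho_def field_simps)
qed

lemma per_edge:
  assumes a: "a \<ge> 0" and b: "b \<ge> 0" and F: "F \<ge> 0" and g: "0 \<le> \<gamma>" "\<gamma> \<le> 1"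
  shows "F*(a*F+b) - rho \<gamma> * (H*(a*H+b)) \<le> rho \<gamma> * ((a*(1+\<gamma>)*F + b)*F - (a*(1+\<gamma>)*F+b)*H)"
proof -
  have p: "(1+\<gamma>)*(3-\<gamma>) > 0" using g by (intro mult_pos_pos) auto
  have key: "rho \<gamma> * ((a*(1+\<gamma>)*F + b)*F - (a*(1+\<gamma>)*F+b)*H) - (F*(a*F+b) - rho \<gamma> * (H*(a*H+b)))
     = a * ((1+\<gamma>)*F - 2*H)^2 / ((1+\<gamma>)*(3-\<gamma>)) + b*(rho \<gamma> - 1)*F"
    using p by (simp add: rho_def field_simps power2_eq_square)
  have "0 \<le> a * ((1+\<gamma>)*F - 2*H)^2 / ((1+\<gamma>)*(3-\<gamma>))" using a p by simp
  moreover have "0 \<le> b*(rho \<gamma> - 1)*F" using b F rho_ge1[OF g] by simp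
  ultimately show ?thesis using key by linarith
qed

lemma affine_coeffs:
  assumes "G \<in> G_aff"
  shows "\<exists>A B. \<forall>e\<in>edges G. A e \<ge> 0 \<and> B e \<ge> 0 \<and> lat G e = (\<lambda>x. A e * x + B e)"
proof -
  have "\<forall>e\<in>edges G. \<exists>a b. a \<ge> 0 \<and> b \<ge> 0 \<and> lat G e = (\<lambda>x. a * x + b)"
    using assms by (auto simp: G_aff_def affine_rp_def affine_lats_def)
  then show ?thesis by metis
qed

lemma edge_flow_nonneg: assumes "feasible G f" shows "edge_flow G f e \<ge> 0"
  using assms unfolding edge_flow_def feasible_def by (auto intro!: sum_nonneg)

lemma TL_nonneg: assumes "G \<in> G_aff" "feasible G f" shows "total_latency G f \<ge> 0"
proof -
  obtain A B where AB: "\<forall>e\<in>edges G. A e \<ge> 0 \<and> B e \<ge> 0 \<and> lat G e = (\<lambda>x. A e * x + B e)"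
    using affine_coeffs[OF assms(1)] by blast
  show ?thesis unfolding total_latency_def
    using AB edge_flow_nonneg[OF assms(2)] by (auto intro!: sum_nonneg)
qed

lemma VI:
  assumes fin: "finite (edges G)" and N: "nash G T f" and g: "feasible G g"
  shows "(\<Sum>e\<in>edges G. (lat G e (edge_flow G f e) + T (lat G e) (edge_flow G f e)) * edge_flow G f e)
       \<le> (\<Sum>e\<in>edges G. (lat G e (edge_flow G f e) + T (lat G e) (edge_flow G f e)) * edge_flow G g e)"
proof -
  define c where "c e = lat G e (edge_flow G f e) + T (lat G e) (edge_flow G f e)" for e
  define C where "C P = (\<Sum>e\<in>set P. c e)" for P
  have feas: "feasible G f" using N by (simp add: nash_def)
  have CP: "path_cost G T f P = C P" if "P \<in> paths G i" for P i
    using path_cost_sum[OF that] by (simp add: C_def c_def)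
  have step: "(\<Sum>P\<in>paths G i. f i P * C P) \<le> (\<Sum>P\<in>paths G i. g i P * C P)" if i: "i < ncom G" for i
  proof (cases "paths G i = {}")
    case True then show ?thesis by simp
  next
    case False
    have finp: "finite (paths G i)" using finite_paths[OF fin] .
    define m where "m = Min (C ` paths G i)"
    have mle: "m \<le> C P" if "P \<in> paths G i" for P using finp that by (simp add: m_def)
    have "m \<in> C ` paths G i" using Min_in[of "C ` paths G i"] finp False by (simp add: m_def)
    then obtain P0 where P0: "P0 \<in> paths G i" "C P0 = m" by auto
    have "(\<Sum>P\<in>paths G i. f i P * C P) = (\<Sum>P\<in>paths G i. f i P * m)"
    proof (intro sum.cong refl)
      fix P assume P: "P \<in> paths G i"
      show "f i P * C P = f i P * m"
      proof (cases "f i P > 0")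
        case True
        then have "path_cost G T f P \<le> path_cost G T f P0" using N i P P0 by (auto simp: nash_def)
        then have "C P \<le> m" using CP[OF P] CP[OF P0(1)] P0 by simp
        then show ?thesis using mle[OF P] by simp
      next
        case False
        then have "f i P = 0" using feas i by (auto simp: feasible_def intro: antisym)
        then show ?thesis by simp
      qed
    qed
    also have "\<dots> = m * rate G i" using feas i by (subst sum_distrib_right[symmetric]) (simp add: feasible_def mult.commute)
    also have "\<dots> = (\<Sum>P\<in>paths G i. g i P * m)" using g i by (subst sum_distrib_right[symmetric]) (simp add: feasible_def mult.commute)
    also have "\<dots> \<le> (\<Sum>P\<in>paths G i. g i P * C P)"
      using g i mle by (intro sum_mono mult_left_mono) (auto simp: feasible_def)
    finally show ?thesis .
  qed
  have "(\<Sum>i<ncom G. \<Sum>P\<in>paths G i. f i P * C P) \<le> (\<Sum>i<ncom G. \<Sum>P\<in>paths G i. g i P * C P)"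
    by (rule sum_mono) (simp add: step)
  then show ?thesis unfolding C_def exchange[OF fin] c_def by (simp add: mult.commute)
qed

lemma nash_bound:
  assumes G: "G \<in> G_aff" and s: "s > 0" and \<gamma>: "0 \<le> \<gamma>" "\<gamma> \<le> 1"
  and cost: "\<forall>e\<in>edges G. \<forall>a b. lat G e = (\<lambda>x. a*x+b) \<longrightarrow> (\<forall>x. lat G e x + T (lat G e) x = s*(a*(1+\<gamma>)*x+b))"
  and N: "nash G T f" and g: "feasible G g"
  shows "total_latency G f \<le> rho \<gamma> * total_latency G g"
proof -
  have fin: "finite (edges G)" using G by (simp add: G_aff_def wf_rp_def)
  obtain A B where AB: "\<forall>e\<in>edges G. A e \<ge> 0 \<and> B e \<ge> 0 \<and> lat G e = (\<lambda>x. A e * x + B e)"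
    using affine_coeffs[OF G] by blast
  have feas: "feasible G f" using N by (simp add: nash_def)
  define F where "F e = edge_flow G f e" for e
  define H where "H e = edge_flow G g e" for e
  define c where "c e = lat G e (F e) + T (lat G e) (F e)" for e
  have ce: "c e = s*(A e*(1+\<gamma>)*F e + B e)" if "e \<in> edges G" for e
    using cost AB that by (simp add: c_def)
  have vi: "(\<Sum>e\<in>edges G. c e * F e) \<le> (\<Sum>e\<in>edges G. c e * H e)"
    using VI[OF fin N g] by (simp add: c_def F_def H_def)
  have pe: "F e * lat G e (F e) - rho \<gamma> * (H e * lat G e (H e)) \<le> (rho \<gamma> / s) * (c e * F e - c e * H e)"
    if e: "e \<in> edges G" for e
  proof -
    have "(rho \<gamma> / s) * (c e * F e - c e * H e) = rho \<gamma> * ((A e*(1+\<gamma>)*F e + B e)*F e - (A e*(1+\<gamma>)*F e + B e)*H e)"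
      using ce[OF e] s by (simp add: field_simps)
    moreover have "F e * lat G e (F e) = F e*(A e*F e+B e)" "H e * lat G e (H e) = H e*(A e*H e+B e)"
      using AB e by auto
    ultimately show ?thesis
      using per_edge[of "A e" "B e" "F e" \<gamma> "H e"] AB e \<gamma> edge_flow_nonneg[OF feas] by (simp add: F_def)
  qed
  have "total_latency G f - rho \<gamma> * total_latency G g
      = (\<Sum>e\<in>edges G. F e * lat G e (F e) - rho \<gamma> * (H e * lat G e (H e)))"
    by (simp add: total_latency_def F_def H_def sum_subtractf sum_distrib_left)
  also have "\<dots> \<le> (\<Sum>e\<in>edges G. (rho \<gamma> / s) * (c e * F e - c e * H e))"
    using pe by (intro sum_mono) auto
  also have "\<dots> = (rho \<gamma> / s) * ((\<Sum>e\<in>edges G. c e * F e) - (\<Sum>e\<in>edges G. c e * H e))"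
    by (simp only: sum_distrib_left[symmetric] sum_subtractf)
  also have "\<dots> \<le> 0"
    using vi s rho_ge1[OF \<gamma>] by (intro mult_nonneg_nonpos) auto
  finally show ?thesis by simp
qed



lemma ratio_upper:
  assumes G: "G \<in> G_aff" and ex: "\<exists>f. nash G T f"
  and bound: "\<And>f g. nash G T f \<Longrightarrow> feasible G g \<Longrightarrow> total_latency G f \<le> r * total_latency G g"
  and r: "r \<ge> 1"
  shows "ratio (L_nash G T) (L_opt G) \<le> ereal r"
proof -
  have wf: "wf_rp G" using G by (simp add: G_aff_def)
  define K where "K = total_latency G ` {g. feasible G g}"
  have Kne: "K \<noteq> {}" using feasible_exists[OF wf] by (auto simp: K_def)
  have Kpos: "\<forall>x\<in>K. 0 \<le> x" using TL_nonneg[OF G] by (auto simp: K_def)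
  have y0: "L_opt G \<ge> 0" unfolding L_opt_def K_def[symmetric] using Kne Kpos by (intro cInf_greatest) auto
  have f0: "0 \<le> total_latency G f" if "nash G T f" for f
    using TL_nonneg[OF G] that by (simp add: nash_def)
  have fy: "total_latency G f \<le> r * L_opt G" if N: "nash G T f" for f
  proof -
    have "total_latency G f / r \<le> L_opt G" unfolding L_opt_def K_def[symmetric]
    proof (rule cInf_greatest[OF Kne])
      fix x assume "x \<in> K"
      then obtain g where g: "feasible G g" "x = total_latency G g" by (auto simp: K_def)
      then have "total_latency G f \<le> r * x" using bound[OF N] by simp
      then show "total_latency G f / r \<le> x" using r by (simp add: divide_le_eq mult.commute)
    qed
    then show ?thesis using r by (simp add: divide_le_eq mult.commute)
  qed
  have NE: "{f. nash G T f} \<noteq> {}" using ex by auto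
  have Ln: "L_nash G T = (SUP f\<in>{f. nash G T f}. ereal (total_latency G f))" using NE unfolding L_nash_def by presburger
  show ?thesis
  proof (cases "L_opt G = 0")
    case True
    then have z: "\<forall>f\<in>{f. nash G T f}. ereal (total_latency G f) = 0" using fy f0
      by (metis antisym mem_Collect_eq mult_zero_right zero_ereal_def)
    have "L_nash G T = (SUP f\<in>{f. nash G T f}. (0::ereal))" unfolding Ln using z by (intro SUP_cong) auto
    also have "\<dots> = 0" using NE by simp
    finally show ?thesis using True r by (simp add: ratio_def)
  next
    case False
    then have y: "L_opt G > 0" using y0 by simp
    have le: "L_nash G T \<le> ereal (r * L_opt G)" unfolding Ln using fy by (intro SUP_least) auto
    obtain f where N: "nash G T f" using ex by blast
    have "ereal 0 \<le> ereal (total_latency G f)" using f0[OF N] by simp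
    also have "\<dots> \<le> L_nash G T" unfolding Ln using N by (intro SUP_upper) auto
    finally have ge: "0 \<le> L_nash G T" by (simp add: zero_ereal_def)
    then obtain v where v: "L_nash G T = ereal v" using le by (cases "L_nash G T") auto
    then have "v \<le> r * L_opt G" using le by simp
    then have "v / L_opt G \<le> r" using y by (simp add: divide_le_eq mult.commute)
    then show ?thesis using False v by (simp add: ratio_def)
  qed
qed

lemma ratio_ge1:
  assumes G: "G \<in> G_aff" and y: "L_opt G > 0"
  shows "ratio (L_nash G T) (L_opt G) \<ge> 1"
proof (cases "{f. nash G T f} = {}")
  case True then show ?thesis using y by (simp add: ratio_def L_nash_def ereal_divide_ereal)
next
  case False
  then obtain f where N: "nash G T f" by auto
  have "L_opt G \<le> total_latency G f" unfolding L_opt_def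
    using N TL_nonneg[OF G] by (intro cInf_lower) (auto simp: nash_def bdd_below_def)
  then have "ereal (L_opt G) \<le> ereal (total_latency G f)" by simp
  also have "\<dots> \<le> L_nash G T" unfolding L_nash_def using False N by (auto intro: SUP_upper)
  finally have ge: "ereal (L_opt G) \<le> L_nash G T" .
  show ?thesis
  proof (cases "L_nash G T")
    case (real v)
    then have "v / L_opt G \<ge> 1" using ge y by simp
    then show ?thesis using real y by (simp add: ratio_def)
  next
    case PInf then show ?thesis using y by (simp add: ratio_def ereal_divide_ereal)
  next
    case MInf then show ?thesis using ge by simp
  qed
qed

definition pig :: "real \<Rightarrow> routing_problem" where
 "pig \<gamma> = \<lparr>edges = {0,1}, src = (\<lambda>_. 0), dst = (\<lambda>_. 1), ncom = 1, orig = (\<lambda>_. 0), dest = (\<lambda>_. 1),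
    rate = (\<lambda>_. 1), lat = (\<lambda>e. if e = 0 then (\<lambda>x. x) else (\<lambda>x. 1 + \<gamma>))\<rparr>"

lemma pig_simps [simp]:
  "edges (pig \<gamma>) = {0,1}" "src (pig \<gamma>) e = 0" "dst (pig \<gamma>) e = 1" "ncom (pig \<gamma>) = 1"
  "orig (pig \<gamma>) i = 0" "dest (pig \<gamma>) i = 1" "rate (pig \<gamma>) i = 1"
  "lat (pig \<gamma>) e = (if e = 0 then (\<lambda>x. x) else (\<lambda>x. 1 + \<gamma>))"
  by (simp_all add: pig_def)

lemma pig_paths [simp]: "paths (pig \<gamma>) i = {[0],[1]}"
proof -
  have "Defs.simple_path (pig \<gamma>) 0 1 P \<longleftrightarrow> P = [0] \<or> P = [1]" for P
  proof (cases P)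
    case Nil then show ?thesis by (simp add: Defs.simple_path_def)
  next
    case (Cons e rest)
    show ?thesis
    proof (cases rest)
      case Nil then show ?thesis using Cons by (auto simp: Defs.simple_path_def)
    next
      case (Cons e2 rest2) then show ?thesis using \<open>P = e # rest\<close> by (simp add: Defs.simple_path_def)
    qed
  qed
  then show ?thesis by (auto simp: paths_def)
qed

lemma pig_ef [simp]: "edge_flow (pig \<gamma>) f 0 = f 0 [0]" "edge_flow (pig \<gamma>) f (Suc 0) = f 0 [1]"
proof -
  have a: "{P \<in> paths (pig \<gamma>) 0. (0::nat) \<in> set P} = {[0::nat]}" by auto
  have b: "{P \<in> paths (pig \<gamma>) 0. (Suc 0) \<in> set P} = {[1::nat]}" by auto
  have "edge_flow (pig \<gamma>) f e = (\<Sum>P\<in>{P \<in> paths (pig \<gamma>) 0. e \<in> set P}. f 0 P)" for e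
    by (simp add: edge_flow_def del: pig_paths)
  then show "edge_flow (pig \<gamma>) f 0 = f 0 [0]" "edge_flow (pig \<gamma>) f (Suc 0) = f 0 [1]"
    by (simp_all only: a b) simp_all
qed

lemma pig_TL: "total_latency (pig \<gamma>) f = f 0 [0] * f 0 [0] + f 0 [1] * (1 + \<gamma>)"
  by (simp add: total_latency_def)

lemma pig_aff: assumes "0 \<le> \<gamma>" shows "pig \<gamma> \<in> G_aff"
proof -
  have "(\<lambda>x::real. x) \<in> affine_lats" unfolding affine_lats_def by (rule CollectI, rule exI[of _ 1], rule exI[of _ 0]) auto
  moreover have "(\<lambda>x::real. 1 + \<gamma>) \<in> affine_lats" unfolding affine_lats_def using assms
    by (intro CollectI exI[of _ 0] exI[of _ "1+\<gamma>"]) auto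
  ultimately show ?thesis
    by (auto simp: G_aff_def wf_rp_def affine_rp_def)
qed

lemma pig_Lopt:
  assumes "0 \<le> \<gamma>" "\<gamma> \<le> 1"
  shows "L_opt (pig \<gamma>) = (1+\<gamma>)*(3-\<gamma>)/4"
  unfolding L_opt_def
proof (rule cInf_eq_minimum)
  define g where "g = (\<lambda>(i::nat) P. if P = [0::nat] then (1+\<gamma>)/2 else if P = [1] then (1-\<gamma>)/2 else 0::real)"
  have "feasible (pig \<gamma>) g" using assms by (auto simp: feasible_def g_def field_simps)
  moreover have "total_latency (pig \<gamma>) g = (1+\<gamma>)*(3-\<gamma>)/4"
    by (simp add: pig_TL g_def field_simps)
  ultimately show "(1+\<gamma>)*(3-\<gamma>)/4 \<in> total_latency (pig \<gamma>) ` {f. feasible (pig \<gamma>) f}" by force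
next
  fix x assume "x \<in> total_latency (pig \<gamma>) ` {f. feasible (pig \<gamma>) f}"
  then obtain f where f: "feasible (pig \<gamma>) f" and x: "x = total_latency (pig \<gamma>) f" by auto
  have s: "f 0 [0] + f 0 [1] = 1" using f by (simp add: feasible_def)
  have "x - (1+\<gamma>)*(3-\<gamma>)/4 = (f 0 [0] - (1+\<gamma>)/2)^2"
  proof -
    have s': "f 0 [1] = 1 - f 0 [0]" using s by simp
    show ?thesis unfolding x pig_TL s' by (simp add: field_simps power2_eq_square)
  qed
  then show "(1+\<gamma>)*(3-\<gamma>)/4 \<le> x" by (metis diff_ge_0_iff_ge zero_le_power2)
qed

lemma pig_lower:
  assumes \<gamma>: "0 \<le> \<gamma>" "\<gamma> \<le> 1" and T: "T (\<lambda>x. x) 1 \<le> \<gamma> + T (\<lambda>x. 1 + \<gamma>) 0"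
  shows "PoA G_aff T \<ge> ereal (rho \<gamma>)"
proof -
  define f1 where "f1 = (\<lambda>(i::nat) P. if P = [0::nat] then 1 else 0::real)"
  have feas: "feasible (pig \<gamma>) f1" by (auto simp: feasible_def f1_def)
  have c0: "path_cost (pig \<gamma>) T f1 [0] = 1 + T (\<lambda>x. x) 1" by (simp add: path_cost_def f1_def)
  have c1: "path_cost (pig \<gamma>) T f1 [1] = (1 + \<gamma>) + T (\<lambda>x. 1 + \<gamma>) 0" by (simp add: path_cost_def f1_def)
  have N: "nash (pig \<gamma>) T f1"
    unfolding nash_def using feas c0 c1 T by (auto simp: f1_def)
  have TL1: "total_latency (pig \<gamma>) f1 = 1" by (simp add: pig_TL f1_def)
  have Ln: "ereal 1 \<le> L_nash (pig \<gamma>) T"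
    unfolding L_nash_def using N TL1 by (auto intro: SUP_upper2)
  define y where "y = (1+\<gamma>)*(3-\<gamma>)/4"
  have y: "y > 0" using \<gamma> by (simp add: y_def)
  have rho: "rho \<gamma> = 1 / y" by (simp add: rho_def y_def)
  have Lo: "L_opt (pig \<gamma>) = y" using pig_Lopt[OF \<gamma>] by (simp add: y_def)
  have rat: "ratio (L_nash (pig \<gamma>) T) (L_opt (pig \<gamma>)) \<ge> ereal (rho \<gamma>)"
  proof (cases "L_nash (pig \<gamma>) T")
    case (real v)
    then have "v \<ge> 1" using Ln by simp
    then have "v / y \<ge> 1 / y" using y by (simp add: divide_right_mono)
    then show ?thesis using real y Lo rho by (simp add: ratio_def)
  next
    case PInf then show ?thesis using y Lo by (simp add: ratio_def ereal_divide_ereal)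
  next
    case MInf then show ?thesis using Ln by simp
  qed
  also have "\<dots> \<le> PoA G_aff T" unfolding PoA_def using pig_aff[OF \<gamma>(1)] by (rule SUP_upper)
  finally show ?thesis .
qed



lemma PoA_upper:
  assumes s: "s > 0" and \<gamma>: "0 \<le> \<gamma>" "\<gamma> \<le> 1"
  and hyp: "\<And>a b x. 0 \<le> a \<Longrightarrow> 0 \<le> b \<Longrightarrow> a*x+b + T (\<lambda>x. a*x+b) x = s*(a*(1+\<gamma>)*x+b)"
  shows "PoA G_aff T \<le> ereal (rho \<gamma>)"
  unfolding PoA_def
proof (rule SUP_least)
  fix G assume G: "G \<in> G_aff"
  have wf: "wf_rp G" using G by (simp add: G_aff_def)
  obtain A B where AB: "\<forall>e\<in>edges G. A e \<ge> 0 \<and> B e \<ge> 0 \<and> lat G e = (\<lambda>x. A e * x + B e)"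
    using affine_coeffs[OF G] by blast
  have cost: "\<forall>e\<in>edges G. \<forall>a b. lat G e = (\<lambda>x. a*x+b) \<longrightarrow> (\<forall>x. lat G e x + T (lat G e) x = s*(a*(1+\<gamma>)*x+b))"
  proof (intro ballI allI impI)
    fix e a b x assume e: "e \<in> edges G" and l: "lat G e = (\<lambda>x. a*x+b)"
    have l2: "(\<lambda>x. a*x+b) = (\<lambda>x. A e * x + B e)" using l AB e by simp
    have "b = B e" using fun_cong[OF l2, of 0] by simp
    moreover have "a + b = A e + B e" using fun_cong[OF l2, of 1] by simp
    ultimately have "a = A e" by simp
    with \<open>b = B e\<close> show "lat G e x + T (lat G e) x = s*(a*(1+\<gamma>)*x+b)" using hyp[of a b x] l AB e by simp
  qed
  have lin: "\<forall>e\<in>edges G. \<exists>\<alpha> \<beta>. \<alpha> \<ge> 0 \<and> (\<forall>x. lat G e x + T (lat G e) x = \<alpha> * x + \<beta>)"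
  proof
    fix e assume e: "e \<in> edges G"
    have c: "lat G e x + T (lat G e) x = s*(A e*(1+\<gamma>)*x+B e)" for x
      using cost[rule_format, OF e, of "A e" "B e"] AB e by simp
    have "\<forall>x. lat G e x + T (lat G e) x = (s*A e*(1+\<gamma>)) * x + s * B e"
      using c by (simp add: algebra_simps)
    moreover have "s*A e*(1+\<gamma>) \<ge> 0" using s AB e \<gamma> by simp
    ultimately show "\<exists>\<alpha> \<beta>. \<alpha> \<ge> 0 \<and> (\<forall>x. lat G e x + T (lat G e) x = \<alpha> * x + \<beta>)" by blast
  qed
  have ex: "\<exists>f. nash G T f" using nash_exists[OF wf lin] .
  show "ratio (L_nash G T) (L_opt G) \<le> ereal (rho \<gamma>)"
    using ratio_upper[OF G ex nash_bound[OF G s \<gamma> cost] rho_ge1[OF \<gamma>]] .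
qed

lemma rho_1 [simp]: "rho 1 = 1" by (simp add: rho_def)

lemma PoA_ge1: "PoA G_aff T \<ge> 1"
proof -
  have "L_opt (pig 0) > 0" using pig_Lopt[of 0] by simp
  then have "1 \<le> ratio (L_nash (pig 0) T) (L_opt (pig 0))" using ratio_ge1[OF pig_aff[of 0]] by simp
  also have "\<dots> \<le> PoA G_aff T" unfolding PoA_def using pig_aff[of 0] by (intro SUP_upper) auto
  finally show ?thesis .
qed

lemma rho_mono: assumes "0 \<le> x" "x < y" "y \<le> 1" shows "rho y < rho x"
proof -
  have e: "(1+z)*(3-z) = 4 - (1-z)^2" for z::real by (simp add: algebra_simps power2_eq_square)
  have "(1-y)^2 < (1-x)^2" using assms by (intro power_strict_mono) auto
  moreover have "(1-x)^2 \<le> 1" using assms by (intro power_le_one) auto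
  then have "(1-x)^2 < 4" by simp
  ultimately show ?thesis unfolding rho_def e using assms
    by (intro divide_strict_left_mono) (auto simp: power2_eq_square)
qed

lemma plus_results:
  assumes \<beta>: "\<beta> \<ge> 0"
  shows "optimal_tolling \<beta> (T_opt_plus \<beta>) \<and> PoA G_aff (T_opt_plus \<beta>) = ereal (rho (if \<beta> < 1 then \<beta> else 1))"
proof -
  define \<gamma> where "\<gamma> = (if \<beta> < 1 then \<beta> else 1)"
  have \<gamma>: "0 \<le> \<gamma>" "\<gamma> \<le> 1" using \<beta> by (auto simp: \<gamma>_def)
  have up: "PoA G_aff (T_opt_plus \<beta>) \<le> ereal (rho \<gamma>)"
    by (rule PoA_upper[of 1 \<gamma>]) (use \<gamma> in \<open>auto simp: T_opt_plus_def \<gamma>_def algebra_simps\<close>)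
  have lo: "PoA G_aff (T_opt_plus \<beta>) \<ge> ereal (rho \<gamma>)"
    by (rule pig_lower[OF \<gamma>]) (auto simp: T_opt_plus_def \<gamma>_def)
  have eq: "PoA G_aff (T_opt_plus \<beta>) = ereal (rho \<gamma>)" using up lo by simp
  have tb: "tolling_bounded \<beta> (T_opt_plus \<beta>)"
    unfolding tolling_bounded_def affine_lats_def
  proof (clarsimp)
    fix a b x :: real assume ab: "0 \<le> a" "0 \<le> b" "0 \<le> x" "x \<le> 1"
    show "0 \<le> T_opt_plus \<beta> (\<lambda>x. a * x + b) x \<and> T_opt_plus \<beta> (\<lambda>x. a * x + b) x \<le> \<beta> * (a * x + b)"
    proof (cases "\<beta> < 1")
      case True then show ?thesis using ab \<beta> by (simp add: T_opt_plus_def algebra_simps mult_left_mono)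
    next
      case False
      have "a*x \<le> \<beta> * (a*x)" using mult_right_mono[of 1 \<beta> "a*x"] False ab by simp
      also have "\<dots> \<le> \<beta> * (a*x+b)" using False ab by (simp add: mult_left_mono)
      finally show ?thesis using ab False by (simp add: T_opt_plus_def)
    qed
  qed
  have opt: "PoA G_aff (T_opt_plus \<beta>) \<le> PoA G_aff T'" if T': "tolling_bounded \<beta> T'" for T'
  proof (cases "\<beta> < 1")
    case True
    have l1: "(\<lambda>x::real. x) \<in> affine_lats" unfolding affine_lats_def
      by (rule CollectI, rule exI[of _ 1], rule exI[of _ 0]) auto
    have l2: "(\<lambda>x::real. 1 + \<gamma>) \<in> affine_lats" unfolding affine_lats_def using \<gamma>
      by (intro CollectI exI[of _ 0] exI[of _ "1+\<gamma>"]) auto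
    have "\<forall>x\<in>{0..1}. 0 \<le> T' (\<lambda>x. x) x \<and> T' (\<lambda>x. x) x \<le> \<beta> * x"
      using T' l1 unfolding tolling_bounded_def by blast
    from this[rule_format, of 1] have "T' (\<lambda>x. x) 1 \<le> \<beta>" by simp
    moreover have "\<forall>x\<in>{0..1}. 0 \<le> T' (\<lambda>x. 1 + \<gamma>) x"
      using T' l2 unfolding tolling_bounded_def by blast
    from this[rule_format, of 0] have "T' (\<lambda>x. 1 + \<gamma>) 0 \<ge> 0" by simp
    ultimately have "T' (\<lambda>x. x) 1 \<le> \<gamma> + T' (\<lambda>x. 1 + \<gamma>) 0" using True by (simp add: \<gamma>_def)
    then show ?thesis using pig_lower[OF \<gamma>] eq by simp
  next
    case False then show ?thesis using eq PoA_ge1[of T'] by (simp add: \<gamma>_def one_ereal_def)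
  qed
  show ?thesis using tb opt eq by (simp add: optimal_tolling_def \<gamma>_def)
qed

lemma minus_results:
  assumes \<beta>: "\<beta> \<ge> 0"
  shows "optimal_subsidy \<beta> (T_opt_minus \<beta>) \<and> PoA G_aff (T_opt_minus \<beta>) = ereal (rho (if \<beta> < 1/2 then 1/(1-\<beta>) - 1 else 1))"
proof -
  define \<gamma> where "\<gamma> = (if \<beta> < 1/2 then 1/(1-\<beta>) - 1 else 1)"
  define s where "s = (if \<beta> < 1/2 then 1 - \<beta> else 1/2)"
  have \<gamma>: "0 \<le> \<gamma>" "\<gamma> \<le> 1" using \<beta> by (auto simp: \<gamma>_def field_simps)
  have s: "s > 0" by (auto simp: s_def)
  have sg: "s * (1 + \<gamma>) = 1" by (auto simp: s_def \<gamma>_def field_simps)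
  have up: "PoA G_aff (T_opt_minus \<beta>) \<le> ereal (rho \<gamma>)"
  proof (rule PoA_upper[OF s \<gamma>])
    fix a b x :: real
    have "s*(a*(1+\<gamma>)*x+b) = (s*(1+\<gamma>))*a*x + s*b" by (simp add: algebra_simps)
    also have "\<dots> = a*x + s*b" using sg by simp
    finally show "a*x+b + T_opt_minus \<beta> (\<lambda>x. a*x+b) x = s*(a*(1+\<gamma>)*x+b)"
      by (auto simp: T_opt_minus_def s_def algebra_simps)
  qed
  have bg: "\<beta> * (1 + \<gamma>) = \<gamma>" if "\<beta> < 1/2" using that by (simp add: \<gamma>_def field_simps)
  have lo: "PoA G_aff (T_opt_minus \<beta>) \<ge> ereal (rho \<gamma>)"
    by (rule pig_lower[OF \<gamma>]) (use bg in \<open>auto simp: T_opt_minus_def \<gamma>_def\<close>)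
  have eq: "PoA G_aff (T_opt_minus \<beta>) = ereal (rho \<gamma>)" using up lo by simp
  have sb: "subsidy_bounded \<beta> (T_opt_minus \<beta>)"
    unfolding subsidy_bounded_def affine_lats_def
  proof (clarsimp)
    fix a b x :: real assume ab: "0 \<le> a" "0 \<le> b" "0 \<le> x" "x \<le> 1"
    have ax: "0 \<le> \<beta> * (a * x)" using ab \<beta> by simp
    show "- (\<beta> * (a * x + b)) \<le> T_opt_minus \<beta> (\<lambda>x. a * x + b) x \<and> T_opt_minus \<beta> (\<lambda>x. a * x + b) x \<le> 0"
    proof (cases "\<beta> < 1/2")
      case True then show ?thesis using ab \<beta> ax by (simp add: T_opt_minus_def algebra_simps)
    next
      case False
      have "b/2 \<le> \<beta> * b" using mult_right_mono[of "1/2" \<beta> b] False ab by simp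
      then have "b/2 \<le> \<beta>*(a*x+b)" using ax by (simp add: distrib_left)
      then show ?thesis using ab False by (simp add: T_opt_minus_def)
    qed
  qed
  have opt: "PoA G_aff (T_opt_minus \<beta>) \<le> PoA G_aff T'" if T': "subsidy_bounded \<beta> T'" for T'
  proof (cases "\<beta> < 1/2")
    case True
    have l1: "(\<lambda>x::real. x) \<in> affine_lats" unfolding affine_lats_def
      by (rule CollectI, rule exI[of _ 1], rule exI[of _ 0]) auto
    have l2: "(\<lambda>x::real. 1 + \<gamma>) \<in> affine_lats" unfolding affine_lats_def using \<gamma>
      by (intro CollectI exI[of _ 0] exI[of _ "1+\<gamma>"]) auto
    have "\<forall>x\<in>{0..1}. T' (\<lambda>x. x) x \<le> 0"
      using T' l1 unfolding subsidy_bounded_def by blast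
    from this[rule_format, of 1] have "T' (\<lambda>x. x) 1 \<le> 0" by simp
    moreover have "\<forall>x\<in>{0..1}. - \<beta> * (1 + \<gamma>) \<le> T' (\<lambda>x. 1 + \<gamma>) x"
      using bspec[OF T'[unfolded subsidy_bounded_def] l2] by simp
    from this[rule_format, of 0] have "T' (\<lambda>x. 1 + \<gamma>) 0 \<ge> - \<beta> * (1 + \<gamma>)" by simp
    ultimately have "T' (\<lambda>x. x) 1 \<le> \<gamma> + T' (\<lambda>x. 1 + \<gamma>) 0" using bg[OF True] by simp
    then show ?thesis using pig_lower[OF \<gamma>] eq by simp
  next
    case False then show ?thesis using eq PoA_ge1[of T'] by (simp add: \<gamma>_def one_ereal_def)
  qed
  show ?thesis using sb opt eq by (simp add: optimal_subsidy_def \<gamma>_def)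
qed



lemma rho_alt: "rho g = 4 / (3 + 2*g - g^2)"
proof -
  have "(1+g)*(3-g) = 3+2*g-g^2" by (simp add: algebra_simps power2_eq_square)
  then show ?thesis by (simp add: rho_def)
qed

theorem proposition1:
  shows "(\<forall>\<beta>::real. \<beta> \<ge> 0 \<longrightarrow>
            optimal_tolling \<beta> (T_opt_plus \<beta>) \<and>
            PoA G_aff (T_opt_plus \<beta>) =
              ereal (if \<beta> < 1 then 4 / (3 + 2 * \<beta> - \<beta>^2) else 1) \<and>
            optimal_subsidy \<beta> (T_opt_minus \<beta>) \<and>
            PoA G_aff (T_opt_minus \<beta>) =
              ereal (if \<beta> < 1/2
                     then (let \<beta>h = 1 / (1 - \<beta>) - 1 in 4 / (3 + 2 * \<beta>h - \<beta>h^2))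
                     else 1))
       \<and> (\<forall>\<beta>::real. 0 < \<beta> \<and> \<beta> < 1 \<longrightarrow>
            PoA G_aff (T_opt_plus \<beta>) > PoA G_aff (T_opt_minus \<beta>))"
proof (intro conjI allI impI)
  fix \<beta> :: real assume \<beta>: "\<beta> \<ge> 0"
  note P = plus_results[OF \<beta>] and M = minus_results[OF \<beta>]
  have e1: "rho (if \<beta> < 1 then \<beta> else 1) = (if \<beta> < 1 then 4 / (3 + 2 * \<beta> - \<beta>^2) else 1)"
    by (simp add: rho_alt)
  have e2: "rho (if \<beta> < 1/2 then 1/(1-\<beta>) - 1 else 1) = (if \<beta> < 1/2
                     then (let \<beta>h = 1 / (1 - \<beta>) - 1 in 4 / (3 + 2 * \<beta>h - \<beta>h^2))
                     else 1)"
    by (simp add: rho_alt Let_def)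
  show "optimal_tolling \<beta> (T_opt_plus \<beta>)" using P by simp
  show "PoA G_aff (T_opt_plus \<beta>) = ereal (if \<beta> < 1 then 4 / (3 + 2 * \<beta> - \<beta>^2) else 1)"
    using P e1 by simp
  show "optimal_subsidy \<beta> (T_opt_minus \<beta>)" using M by simp
  show "PoA G_aff (T_opt_minus \<beta>) = ereal (if \<beta> < 1/2
                     then (let \<beta>h = 1 / (1 - \<beta>) - 1 in 4 / (3 + 2 * \<beta>h - \<beta>h^2))
                     else 1)"
    using M e2 by simp
next
  fix \<beta> :: real assume \<beta>: "0 < \<beta> \<and> \<beta> < 1"
  then have b0: "\<beta> \<ge> 0" by simp
  have P: "PoA G_aff (T_opt_plus \<beta>) = ereal (rho \<beta>)" using plus_results[OF b0] \<beta> by simp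
  show "PoA G_aff (T_opt_plus \<beta>) > PoA G_aff (T_opt_minus \<beta>)"
  proof (cases "\<beta> < 1/2")
    case True
    define g where "g = 1/(1-\<beta>) - 1"
    have M: "PoA G_aff (T_opt_minus \<beta>) = ereal (rho g)" using minus_results[OF b0] True by (simp add: g_def)
    have g1: "g = \<beta> / (1-\<beta>)" using \<beta> by (simp add: g_def field_simps)
    have "\<beta> < g" unfolding g1 using \<beta> by (simp add: field_simps)
    moreover have "g \<le> 1" unfolding g1 using True \<beta> by (simp add: field_simps)
    ultimately have "rho g < rho \<beta>" using b0 by (intro rho_mono) auto
    then show ?thesis using P M by simp
  next
    case False
    have M: "PoA G_aff (T_opt_minus \<beta>) = ereal 1" using minus_results[OF b0] False by simp
    have "rho 1 < rho \<beta>" using \<beta> by (intro rho_mono) auto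
    then show ?thesis using P M by simp
  qed
qed

end
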